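(* Let $w\in K((t^\Gamma))$ have positive value, let $n\in\mathbb N$, and let $\tau=\max\{\nu(f(w))\mid f\in D_n,\ f(w)\ne0\}$. Let $\lambda\in\Gamma$ with $\lambda>\tau$, and $h\in K((t^\Gamma))$ with $\nu(h)=\lambda$. Then for every nonzero $f\in D_n$ one has $f(w+h)\ne0$.
   Context: $K$ is a field, $\Gamma$ a totally ordered abelian group, $K((t^\Gamma))$ the field of formal power series with well ordered support in $\Gamma$ and coefficients in $K$, and $\nu$ its $t$-adic valuation. $R\subset K((t^\Gamma))$ is a local ring essentially of finite type over $K$ dominated by $\nu$, $d=\dim R$, and $R=A_P$ where $A\subset R_\nu$ is a finitely generated $K$-algebra and $P$ is the center of $\nu$ on $A$. Choose $x_1,\dots,x_d\in A$ algebraically independent over $K$ and $b_1,\dots,b_r\in A$ with $A=Bb_1+\cdots+Bb_r$, $B=K[x_1,\dots,x_d]$. For an indeterminate $z$, $D_n=\{f_1b_1+\cdots+f_rb_r\mid f_j\in K[x_1,\dots,x_d,z]$ of total degree $\le n\}\subset A[z]$. $f(w)$ denotes the image of $f$ under $A[z]\to K((t^\Gamma))$, $z\mapsto w$. (The maximum defining $\tau$ exists since the set of values is finite and nonempty.) *)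

theory Defs
  imports Main
begin

text \<open>Elements of K((t^Gamma)) are represented as coefficient functions
  Gamma => K whose support is well ordered.\<close>

type_synonym ('g, 'k) hs = "'g \<Rightarrow> 'k"

definition hsupp :: "('g, 'k::zero) hs \<Rightarrow> 'g set" where
  "hsupp s = {a. s a \<noteq> 0}"

definition hahn :: "('g::linorder, 'k::zero) hs \<Rightarrow> bool" where
  "hahn s \<longleftrightarrow> wf {(a, b). a \<in> hsupp s \<and> b \<in> hsupp s \<and> a < b}"

definition hzero :: "('g, 'k::zero) hs" where
  "hzero = (\<lambda>_. 0)"

definition hconst :: "'k::zero \<Rightarrow> ('g::zero, 'k) hs" where
  "hconst c = (\<lambda>g. if g = 0 then c else 0)"

definition hone :: "('g::zero, 'k::{zero,one}) hs" where
  "hone = hconst 1"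

definition hadd :: "('g, 'k::plus) hs \<Rightarrow> ('g, 'k) hs \<Rightarrow> ('g, 'k) hs" where
  "hadd s u = (\<lambda>g. s g + u g)"

definition hneg :: "('g, 'k::uminus) hs \<Rightarrow> ('g, 'k) hs" where
  "hneg s = (\<lambda>g. - s g)"

text \<open>Cauchy product; the index set is finite for series with well ordered support.\<close>
definition hmul :: "('g::ab_group_add, 'k::comm_ring) hs \<Rightarrow> ('g, 'k) hs \<Rightarrow> ('g, 'k) hs" where
  "hmul s u = (\<lambda>g. \<Sum>a\<in>{a. s a \<noteq> 0 \<and> u (g - a) \<noteq> 0}. s a * u (g - a))"

definition hscal :: "'k::times \<Rightarrow> ('g, 'k) hs \<Rightarrow> ('g, 'k) hs" where
  "hscal c s = (\<lambda>g. c * s g)"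

definition hsum :: "('i \<Rightarrow> ('g, 'k::comm_monoid_add) hs) \<Rightarrow> 'i set \<Rightarrow> ('g, 'k) hs" where
  "hsum F I = (\<lambda>g. \<Sum>i\<in>I. F i g)"

definition hpow :: "('g::ab_group_add, 'k::comm_ring_1) hs \<Rightarrow> nat \<Rightarrow> ('g, 'k) hs" where
  "hpow s k = ((hmul s) ^^ k) hone"

definition hval :: "('g::linorder, 'k::zero) hs \<Rightarrow> 'g" where
  "hval s = (LEAST g. s g \<noteq> 0)"

definition hsubalg :: "('g::linordered_ab_group_add, 'k::field) hs set \<Rightarrow> bool" where
  "hsubalg S \<longleftrightarrow> S \<subseteq> {s. hahn s} \<and> (\<forall>c. hconst c \<in> S)
     \<and> (\<forall>a\<in>S. \<forall>b\<in>S. hadd a b \<in> S \<and> hmul a b \<in> S \<and> hneg a \<in> S)"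

definition halg_gen :: "('g::linordered_ab_group_add, 'k::field) hs set \<Rightarrow> ('g, 'k) hs set" where
  "halg_gen G = \<Inter>{S. hsubalg S \<and> G \<subseteq> S}"

definition fin_gen_alg :: "('g::linordered_ab_group_add, 'k::field) hs set \<Rightarrow> bool" where
  "fin_gen_alg A \<longleftrightarrow> hsubalg A \<and> (\<exists>G. finite G \<and> G \<subseteq> A \<and> A = halg_gen G)"

definition hideal :: "('g::linordered_ab_group_add, 'k::field) hs set \<Rightarrow> ('g, 'k) hs set \<Rightarrow> bool" where
  "hideal R I \<longleftrightarrow> hzero \<in> I \<and> I \<subseteq> R \<and> (\<forall>a\<in>I. \<forall>b\<in>I. hadd a b \<in> I)
     \<and> (\<forall>a\<in>I. \<forall>r\<in>R. hmul r a \<in> I)"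

definition hprime :: "('g::linordered_ab_group_add, 'k::field) hs set \<Rightarrow> ('g, 'k) hs set \<Rightarrow> bool" where
  "hprime R I \<longleftrightarrow> hideal R I \<and> I \<noteq> R \<and> (\<forall>a\<in>R. \<forall>b\<in>R. hmul a b \<in> I \<longrightarrow> a \<in> I \<or> b \<in> I)"

definition prime_chain :: "('g::linordered_ab_group_add, 'k::field) hs set \<Rightarrow> nat \<Rightarrow> bool" where
  "prime_chain R m \<longleftrightarrow> (\<exists>p :: nat \<Rightarrow> ('g, 'k) hs set.
      (\<forall>i\<le>m. hprime R (p i)) \<and> (\<forall>i<m. p i \<subset> p (Suc i)))"

definition krull_dim_eq :: "('g::linordered_ab_group_add, 'k::field) hs set \<Rightarrow> nat \<Rightarrow> bool" where
  "krull_dim_eq R d \<longleftrightarrow> prime_chain R d \<and> \<not> prime_chain R (Suc d)"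

definition hcenter :: "('g::linordered_ab_group_add, 'k::field) hs set \<Rightarrow> ('g, 'k) hs set" where
  "hcenter A = {a \<in> A. a = hzero \<or> hval a > 0}"

definition hlocalize :: "('g::linordered_ab_group_add, 'k::field) hs set \<Rightarrow> ('g, 'k) hs set \<Rightarrow> ('g, 'k) hs set" where
  "hlocalize A P = {q. hahn q \<and> (\<exists>a\<in>A. \<exists>s\<in>A - P. hmul s q = a)}"

text \<open>Monomials in x_0..x_(d-1): exponent vectors supported in {..<d}.\<close>
definition hprodn :: "(nat \<Rightarrow> ('g::ab_group_add, 'k::comm_ring_1) hs) \<Rightarrow> nat \<Rightarrow> ('g, 'k) hs" where
  "hprodn F m = fold (\<lambda>i acc. hmul acc (F i)) [0..<m] hone"

definition xmon :: "(nat \<Rightarrow> ('g::ab_group_add, 'k::comm_ring_1) hs) \<Rightarrow> nat \<Rightarrow> (nat \<Rightarrow> nat) \<Rightarrow> ('g, 'k) hs" where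
  "xmon x d \<alpha> = hprodn (\<lambda>i. hpow (x i) (\<alpha> i)) d"

definition exps :: "nat \<Rightarrow> (nat \<Rightarrow> nat) set" where
  "exps d = {\<alpha>. \<forall>i\<ge>d. \<alpha> i = 0}"

text \<open>Elements of B = K[x_0,...,x_(d-1)] evaluated in K((t^Gamma)).\<close>
definition Bset :: "(nat \<Rightarrow> ('g::linordered_ab_group_add, 'k::field) hs) \<Rightarrow> nat \<Rightarrow> ('g, 'k) hs set" where
  "Bset x d = {hsum (\<lambda>\<alpha>. hscal (c \<alpha>) (xmon x d \<alpha>)) F | F c. finite F \<and> F \<subseteq> exps d}"

definition alg_indep :: "(nat \<Rightarrow> ('g::linordered_ab_group_add, 'k::field) hs) \<Rightarrow> nat \<Rightarrow> bool" where
  "alg_indep x d \<longleftrightarrow> (\<forall>F c. finite F \<and> F \<subseteq> exps d \<and>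
       hsum (\<lambda>\<alpha>. hscal (c \<alpha>) (xmon x d \<alpha>)) F = hzero \<longrightarrow> (\<forall>\<alpha>\<in>F. c \<alpha> = 0))"

text \<open>Monomials x^alpha z^k of total degree <= n in K[x_0..x_(d-1), z]:
  exponent vectors alpha with alpha i = 0 for i > d, the exponent of z being alpha d.\<close>
definition mons :: "nat \<Rightarrow> nat \<Rightarrow> (nat \<Rightarrow> nat) set" where
  "mons d n = {\<alpha>. (\<forall>i>d. \<alpha> i = 0) \<and> (\<Sum>i\<le>d. \<alpha> i) \<le> n}"

text \<open>An element f = f_1 b_1 + ... + f_r b_r of D_n is given by the coefficients
  c j alpha of f_(j+1) (j < r, alpha in mons d n).  Its image f(y) under z |-> y:\<close>
definition Dn_eval :: "(nat \<Rightarrow> ('g::linordered_ab_group_add, 'k::field) hs) \<Rightarrow> nat \<Rightarrow>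
    (nat \<Rightarrow> ('g, 'k) hs) \<Rightarrow> nat \<Rightarrow> nat \<Rightarrow> (nat \<Rightarrow> (nat \<Rightarrow> nat) \<Rightarrow> 'k) \<Rightarrow> ('g, 'k) hs \<Rightarrow> ('g, 'k) hs" where
  "Dn_eval x d b r n c y = hsum (\<lambda>j. hmul
       (hsum (\<lambda>\<alpha>. hscal (c j \<alpha>) (hmul (xmon x d \<alpha>) (hpow y (\<alpha> d)))) (mons d n)) (b j)) {..<r}"

text \<open>The coefficient of z^k of f as an element of A[z].\<close>
definition Dn_zcoeff :: "(nat \<Rightarrow> ('g::linordered_ab_group_add, 'k::field) hs) \<Rightarrow> nat \<Rightarrow>
    (nat \<Rightarrow> ('g, 'k) hs) \<Rightarrow> nat \<Rightarrow> nat \<Rightarrow> (nat \<Rightarrow> (nat \<Rightarrow> nat) \<Rightarrow> 'k) \<Rightarrow> nat \<Rightarrow> ('g, 'k) hs" where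
  "Dn_zcoeff x d b r n c k = hsum (\<lambda>j. hmul
       (hsum (\<lambda>\<alpha>. hscal (c j \<alpha>) (xmon x d \<alpha>)) {\<alpha> \<in> mons d n. \<alpha> d = k}) (b j)) {..<r}"

definition Dn_nonzero :: "(nat \<Rightarrow> ('g::linordered_ab_group_add, 'k::field) hs) \<Rightarrow> nat \<Rightarrow>
    (nat \<Rightarrow> ('g, 'k) hs) \<Rightarrow> nat \<Rightarrow> nat \<Rightarrow> (nat \<Rightarrow> (nat \<Rightarrow> nat) \<Rightarrow> 'k) \<Rightarrow> bool" where
  "Dn_nonzero x d b r n c \<longleftrightarrow> (\<exists>k. Dn_zcoeff x d b r n c k \<noteq> hzero)"

end

theory Submission imports Defs Complex_Main begin

definition wo :: "'a::linorder set \<Rightarrow> bool" where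
  "wo S \<longleftrightarrow> wf {(a, b). a \<in> S \<and> b \<in> S \<and> a < b}"

lemma hahn_wo: "hahn s \<longleftrightarrow> wo (hsupp s)"
  by (simp add: hahn_def wo_def)

lemma wo_min: "wo S \<longleftrightarrow> (\<forall>X. X \<subseteq> S \<longrightarrow> X \<noteq> {} \<longrightarrow> (\<exists>m\<in>X. \<forall>y\<in>X. m \<le> y))"
proof
  assume w: "wo S"
  show "\<forall>X. X \<subseteq> S \<longrightarrow> X \<noteq> {} \<longrightarrow> (\<exists>m\<in>X. \<forall>y\<in>X. m \<le> y)"
  proof (intro allI impI)
    fix X assume "X \<subseteq> S" "X \<noteq> {}"
    then obtain x where "x \<in> X" by auto
    from w[unfolded wo_def wf_eq_minimal] \<open>x \<in> X\<close> obtain z where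
      "z \<in> X" "\<forall>y. (y, z) \<in> {(a, b). a \<in> S \<and> b \<in> S \<and> a < b} \<longrightarrow> y \<notin> X" by blast
    then show "\<exists>m\<in>X. \<forall>y\<in>X. m \<le> y" using \<open>X \<subseteq> S\<close> by (metis (mono_tags, lifting) case_prodI mem_Collect_eq not_le subsetD)
  qed
next
  assume m: "\<forall>X. X \<subseteq> S \<longrightarrow> X \<noteq> {} \<longrightarrow> (\<exists>m\<in>X. \<forall>y\<in>X. m \<le> y)"
  show "wo S" unfolding wo_def wf_eq_minimal
  proof (intro allI impI)
    fix Q :: "'a set" and x assume "x \<in> Q"
    show "\<exists>z\<in>Q. \<forall>y. (y, z) \<in> {(a, b). a \<in> S \<and> b \<in> S \<and> a < b} \<longrightarrow> y \<notin> Q"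
    proof (cases "Q \<inter> S = {}")
      case True then show ?thesis using \<open>x \<in> Q\<close> by auto
    next
      case False
      then obtain m where "m \<in> Q \<inter> S" "\<forall>y\<in>Q \<inter> S. m \<le> y" using m[rule_format, of "Q \<inter> S"] by auto
      then show ?thesis apply (intro bexI[of _ m]) by (auto simp: not_less[symmetric])
    qed
  qed
qed

lemma wo_minD: "wo S \<Longrightarrow> X \<subseteq> S \<Longrightarrow> X \<noteq> {} \<Longrightarrow> \<exists>m\<in>X. \<forall>y\<in>X. m \<le> y"
  unfolding wo_min by (elim allE impE)

lemma wo_subset: "wo S \<Longrightarrow> T \<subseteq> S \<Longrightarrow> wo T"
  unfolding wo_def by (erule wf_subset) auto

lemma wo_Un: assumes "wo S" "wo T" shows "wo (S \<union> T)"
  unfolding wo_min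
proof (intro allI impI)
  fix X assume X: "X \<subseteq> S \<union> T" "X \<noteq> {}"
  show "\<exists>m\<in>X. \<forall>y\<in>X. m \<le> y"
  proof (cases "X \<inter> S = {}")
    case True then have "X \<subseteq> T" using X by auto
    then show ?thesis using wo_minD[OF assms(2) _ X(2)] by blast
  next
    case F1: False
    then obtain m1 where m1: "m1 \<in> X \<inter> S" "\<forall>y\<in>X \<inter> S. m1 \<le> y" using wo_minD[OF assms(1) inf_le2 F1] by blast
    show ?thesis
    proof (cases "X \<inter> T = {}")
      case True then have "X \<inter> S = X" using X by auto
      then show ?thesis using m1 by auto
    next
      case False
      then obtain m2 where m2: "m2 \<in> X \<inter> T" "\<forall>y\<in>X \<inter> T. m2 \<le> y" using wo_minD[OF assms(2) inf_le2 False] by blast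
      have "\<forall>y\<in>X. min m1 m2 \<le> y"
      proof
        fix y assume "y \<in> X"
        then have "y \<in> S \<or> y \<in> T" using X by auto
        then show "min m1 m2 \<le> y" using m1 m2 \<open>y \<in> X\<close> by (auto simp: min_le_iff_disj)
      qed
      then show ?thesis using m1 m2 by (auto simp: min_def)
    qed
  qed
qed

lemma wo_no_dec: assumes "wo S" "\<forall>i. f i \<in> S" shows "\<exists>i. \<not> f (Suc i) < f i"
proof -
  have "range f \<subseteq> S" "range f \<noteq> {}" using assms(2) by auto
  then obtain m where m: "m \<in> range f" "\<forall>y\<in>range f. m \<le> y"
    using wo_minD[OF assms(1)] by blast
  then obtain i where i: "m = f i" by auto
  have "f i \<le> f (Suc i)" using m i by simp
  then show ?thesis by (auto simp: not_less)
qed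

lemma wo_nondec_sub:
  fixes a :: "nat \<Rightarrow> 'a::linorder"
  assumes "wo S" "\<forall>i. a i \<in> S"
  shows "\<exists>\<phi>. strict_mono \<phi> \<and> (\<forall>i. a (\<phi> i) \<le> a (\<phi> (Suc i)))"
proof -
  obtain f where f: "strict_mono f" "monoseq (\<lambda>n. a (f n))" using seq_monosub by blast
  show ?thesis
  proof (cases "\<forall>m. \<forall>n\<ge>m. a (f m) \<le> a (f n)")
    case True
    then have "\<forall>i. a (f i) \<le> a (f (Suc i))" by simp
    then show ?thesis using f(1) by blast
  next
    case False
    then have dec: "\<forall>m. \<forall>n\<ge>m. a (f n) \<le> a (f m)" using f(2) unfolding monoseq_def by blast
    have "range (\<lambda>n. a (f n)) \<subseteq> S" "range (\<lambda>n. a (f n)) \<noteq> {}" using assms(2) by auto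
    then obtain mm where mm: "mm \<in> range (\<lambda>n. a (f n))" "\<forall>y\<in>range (\<lambda>n. a (f n)). mm \<le> y"
      using wo_minD[OF assms(1)] by blast
    then obtain N where N: "mm = a (f N)" by auto
    have const: "\<forall>n\<ge>N. a (f n) = a (f N)"
    proof (intro allI impI)
      fix n assume "N \<le> n"
      then have "a (f n) \<le> a (f N)" using dec by blast
      moreover have "mm \<le> a (f n)" using mm(2) by simp
      ultimately show "a (f n) = a (f N)" using N by simp
    qed
    define \<phi> where "\<phi> i = f (N + i)" for i
    have "strict_mono \<phi>" using f(1) unfolding \<phi>_def strict_mono_def by simp
    moreover have "\<forall>i. a (\<phi> i) \<le> a (\<phi> (Suc i))"
    proof
      fix i
      have "a (f (N + i)) = a (f N)" "a (f (N + Suc i)) = a (f N)" using const le_add1 by blast+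
      then show "a (\<phi> i) \<le> a (\<phi> (Suc i))" unfolding \<phi>_def by simp
    qed
    ultimately show ?thesis by blast
  qed
qed

lemma wo_fin_reps:
  fixes S T :: "'g::linordered_ab_group_add set"
  assumes "wo S" "wo T"
  shows "finite {a \<in> S. g - a \<in> T}"
proof (rule ccontr)
  assume "infinite {a \<in> S. g - a \<in> T}"
  then obtain f :: "nat \<Rightarrow> 'g" where f: "inj f" "range f \<subseteq> {a \<in> S. g - a \<in> T}"
    unfolding infinite_iff_countable_subset by blast
  have fS: "\<forall>i. f i \<in> S" using f(2) by blast
  obtain \<phi> where \<phi>: "strict_mono \<phi>" "\<forall>i. f (\<phi> i) \<le> f (\<phi> (Suc i))"
    using wo_nondec_sub[OF assms(1) fS] by blast
  have "\<forall>i. f (\<phi> i) < f (\<phi> (Suc i))"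
  proof
    fix i
    have "\<phi> i < \<phi> (Suc i)" using \<phi>(1) by (simp add: strict_mono_def)
    then have "\<phi> i \<noteq> \<phi> (Suc i)" by simp
    then have "f (\<phi> i) \<noteq> f (\<phi> (Suc i))" using f(1) by (simp add: inj_eq)
    then show "f (\<phi> i) < f (\<phi> (Suc i))" using \<phi>(2) by (simp add: order_le_neq_trans)
  qed
  then have "\<forall>i. g - f (\<phi> (Suc i)) < g - f (\<phi> i)" by simp
  moreover have "\<forall>i. g - f (\<phi> i) \<in> T" using f(2) by auto
  ultimately show False using wo_no_dec[OF assms(2), of "\<lambda>i. g - f (\<phi> i)"] by blast
qed

lemma wo_sumset:
  fixes S T :: "'g::linordered_ab_group_add set"
  assumes "wo S" "wo T"
  shows "wo {a + b | a b. a \<in> S \<and> b \<in> T}"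
proof (rule ccontr)
  define SS where "SS = {a + b | a b. a \<in> S \<and> b \<in> T}"
  assume "\<not> wo {a + b | a b. a \<in> S \<and> b \<in> T}"
  then have "\<not> wf {(x, y). x \<in> SS \<and> y \<in> SS \<and> x < y}" unfolding wo_def SS_def by simp
  then obtain f where f: "\<forall>i. (f (Suc i), f i) \<in> {(x, y). x \<in> SS \<and> y \<in> SS \<and> x < y}"
    unfolding wf_iff_no_infinite_down_chain by blast
  have fdec: "\<forall>i. f (Suc i) < f i" using f by simp
  have "\<forall>i. f i \<in> SS" using f by simp
  then have "\<forall>i. \<exists>p. fst p \<in> S \<and> snd p \<in> T \<and> f i = fst p + snd p" unfolding SS_def by force
  then have "\<exists>p. \<forall>i. fst (p i) \<in> S \<and> snd (p i) \<in> T \<and> f i = fst (p i) + snd (p i)" by (rule choice)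
  then obtain p where p: "\<forall>i. fst (p i) \<in> S \<and> snd (p i) \<in> T \<and> f i = fst (p i) + snd (p i)" by blast
  define a where "a i = fst (p i)" for i
  define b where "b i = snd (p i)" for i
  have ab: "\<forall>i. a i \<in> S \<and> b i \<in> T \<and> f i = a i + b i" using p unfolding a_def b_def by blast
  have fdec2: "i < j \<Longrightarrow> f j < f i" for i j
  proof (induction j)
    case 0 then show ?case by simp
  next
    case (Suc j)
    show ?case
    proof (cases "i = j")
      case True then show ?thesis using fdec by simp
    next
      case False then have "i < j" using Suc.prems by simp
      then have "f j < f i" using Suc.IH by simp
      then show ?thesis using fdec[rule_format, of j] by simp
    qed
  qed
  have aS: "\<forall>i. a i \<in> S" using ab by blast
  obtain \<phi> where \<phi>: "strict_mono \<phi>" "\<forall>i. a (\<phi> i) \<le> a (\<phi> (Suc i))"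
    using wo_nondec_sub[OF assms(1) aS] by blast
  have "\<forall>i. b (\<phi> (Suc i)) < b (\<phi> i)"
  proof
    fix i
    have "f (\<phi> (Suc i)) < f (\<phi> i)" using fdec2 \<phi>(1) by (simp add: strict_mono_def)
    then have "a (\<phi> (Suc i)) + b (\<phi> (Suc i)) < a (\<phi> i) + b (\<phi> i)" using ab by simp
    then show "b (\<phi> (Suc i)) < b (\<phi> i)" using \<phi>(2)[rule_format, of i]
      by (meson add_mono not_le)
  qed
  moreover have "\<forall>i. b (\<phi> i) \<in> T" using ab by blast
  ultimately show False using wo_no_dec[OF assms(2), of "\<lambda>i. b (\<phi> i)"] by blast
qed

lemma wo_empty: "wo {}" by (simp add: wo_def)
lemma wo_single: "wo {x::'a::linorder}"
proof -
  have e: "{(a, b). a \<in> {x} \<and> b \<in> {x} \<and> a < b} = {}" by auto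
  show ?thesis unfolding wo_def e by simp
qed

lemma hahn_hzero: "hahn hzero"
  by (simp add: hahn_wo hsupp_def hzero_def wo_empty)

lemma hahn_hconst: "hahn (hconst c)"
proof -
  have "hsupp (hconst c) \<subseteq> {0}" by (auto simp: hsupp_def hconst_def split: if_splits)
  then show ?thesis unfolding hahn_wo by (rule wo_subset[OF wo_single])
qed

lemma hahn_hone: "hahn hone" by (simp add: hone_def hahn_hconst)

lemma hahn_hadd: fixes s :: "('g::linordered_ab_group_add,'k::field) hs" shows "hahn s \<Longrightarrow> hahn t \<Longrightarrow> hahn (hadd s t)"
proof -
  assume "hahn s" "hahn t"
  have "hsupp (hadd s t) \<subseteq> hsupp s \<union> hsupp t" by (auto simp: hsupp_def hadd_def)
  then show ?thesis using \<open>hahn s\<close> \<open>hahn t\<close> unfolding hahn_wo by (metis wo_subset wo_Un)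
qed

lemma hahn_hneg: fixes s :: "('g::linordered_ab_group_add,'k::field) hs" shows "hahn s \<Longrightarrow> hahn (hneg s)"
  by (simp add: hahn_wo hsupp_def hneg_def)

definition ix :: "('g::ab_group_add, 'k::zero) hs \<Rightarrow> ('g, 'k) hs \<Rightarrow> 'g \<Rightarrow> 'g set" where
  "ix s t g = {a. s a \<noteq> 0 \<and> t (g - a) \<noteq> 0}"

lemma ix_eq: "ix s t g = {a \<in> hsupp s. g - a \<in> hsupp t}"
  by (auto simp: ix_def hsupp_def)

lemma finite_ix: fixes s :: "('g::linordered_ab_group_add,'k::field) hs" shows "hahn s \<Longrightarrow> hahn t \<Longrightarrow> finite (ix s t g)"
  unfolding ix_eq hahn_wo by (rule wo_fin_reps)

lemma hmul_ix: "hmul s t g = (\<Sum>a\<in>ix s t g. s a * t (g - a))"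
  by (simp add: hmul_def ix_def)

lemma hsupp_hmul: fixes s :: "('g::linordered_ab_group_add,'k::field) hs" shows "hsupp (hmul s t) \<subseteq> {a + b | a b. a \<in> hsupp s \<and> b \<in> hsupp t}"
proof
  fix g assume "g \<in> hsupp (hmul s t)"
  then have "ix s t g \<noteq> {}" by (auto simp: hsupp_def hmul_ix)
  then obtain a where "a \<in> ix s t g" by auto
  then have "a \<in> hsupp s" "g - a \<in> hsupp t" "g = a + (g - a)" by (auto simp: ix_eq)
  then show "g \<in> {a + b | a b. a \<in> hsupp s \<and> b \<in> hsupp t}" by blast
qed

lemma hahn_hmul: fixes s :: "('g::linordered_ab_group_add,'k::field) hs" shows "hahn s \<Longrightarrow> hahn t \<Longrightarrow> hahn (hmul s t)"
  unfolding hahn_wo by (rule wo_subset[OF wo_sumset hsupp_hmul])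

lemma hmul_eq_sum:
  fixes s :: "('g::linordered_ab_group_add,'k::field) hs"
  assumes "finite F" "ix s t g \<subseteq> F"
  shows "hmul s t g = (\<Sum>a\<in>F. s a * t (g - a))"
  unfolding hmul_ix
  by (rule sum.mono_neutral_right[symmetric, OF assms]) (auto simp: ix_def)

lemma hmul_comm: fixes s :: "('g::linordered_ab_group_add,'k::field) hs" shows "hmul s t = hmul t s"
proof
  fix g
  show "hmul s t g = hmul t s g"
    unfolding hmul_ix
    by (rule sum.reindex_bij_witness[of _ "\<lambda>a. g - a" "\<lambda>a. g - a"]) (auto simp: ix_def mult.commute)
qed

lemma hmul_hadd_right:
  fixes s :: "('g::linordered_ab_group_add,'k::field) hs"
  assumes "hahn s" "hahn t" "hahn u"
  shows "hmul s (hadd t u) = hadd (hmul s t) (hmul s u)"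
proof
  fix g
  let ?F = "ix s t g \<union> ix s u g"
  have fin: "finite ?F" using finite_ix assms by blast
  have "hmul s (hadd t u) g = (\<Sum>a\<in>?F. s a * (t (g - a) + u (g - a)))"
  proof -
    have sub: "ix s (hadd t u) g \<subseteq> ?F" by (auto simp: ix_def hadd_def)
    show ?thesis using hmul_eq_sum[OF fin sub] by (simp add: hadd_def)
  qed
  also have "\<dots> = (\<Sum>a\<in>?F. s a * t (g - a)) + (\<Sum>a\<in>?F. s a * u (g - a))"
    by (simp add: distrib_left sum.distrib)
  also have "\<dots> = hmul s t g + hmul s u g"
    using hmul_eq_sum[OF fin, of s t g] hmul_eq_sum[OF fin, of s u g] by simp
  finally show "hmul s (hadd t u) g = hadd (hmul s t) (hmul s u) g" by (simp add: hadd_def)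
qed

lemma hmul_hone: fixes s :: "('g::linordered_ab_group_add,'k::field) hs" shows "hmul hone s = s"
proof
  fix g
  have "ix hone s g \<subseteq> {0}" by (auto simp: ix_def hone_def hconst_def split: if_splits)
  then have "hmul hone s g = (\<Sum>a\<in>{0}. hone a * s (g - a))" by (rule hmul_eq_sum[rotated]) simp
  then show "hmul hone s g = s g" by (simp add: hone_def hconst_def)
qed

lemma hmul_assoc:
  fixes s :: "('g::linordered_ab_group_add,'k::field) hs"
  assumes s: "hahn s" and t: "hahn t" and u: "hahn u"
  shows "hmul (hmul s t) u = hmul s (hmul t u)"
proof
  fix g
  define SS where "SS = {a + b | a b. a \<in> hsupp s \<and> b \<in> hsupp t}"
  define TU where "TU = {a + b | a b. a \<in> hsupp t \<and> b \<in> hsupp u}"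
  define F1 where "F1 = {a \<in> SS. g - a \<in> hsupp u}"
  define F2 where "F2 = {b \<in> hsupp s. g - b \<in> TU}"
  have woSS: "wo SS" unfolding SS_def using s t by (simp add: hahn_wo wo_sumset)
  have woTU: "wo TU" unfolding TU_def using t u by (simp add: hahn_wo wo_sumset)
  have fF1: "finite F1" unfolding F1_def using wo_fin_reps[OF woSS] u by (simp add: hahn_wo)
  have fF2: "finite F2" unfolding F2_def using wo_fin_reps[OF _ woTU] s by (simp add: hahn_wo)
  have sub1: "ix (hmul s t) u g \<subseteq> F1"
    using hsupp_hmul[of s t] unfolding F1_def SS_def ix_eq by blast
  have sub2: "ix s (hmul t u) g \<subseteq> F2"
    using hsupp_hmul[of t u] unfolding F2_def TU_def ix_eq by blast
  have "hmul (hmul s t) u g = (\<Sum>a\<in>F1. hmul s t a * u (g - a))"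
    by (rule hmul_eq_sum[OF fF1 sub1])
  also have "\<dots> = (\<Sum>a\<in>F1. \<Sum>b\<in>ix s t a. s b * t (a - b) * u (g - a))"
    by (simp add: hmul_ix sum_distrib_right)
  also have "\<dots> = (\<Sum>(a, b)\<in>Sigma F1 (ix s t). s b * t (a - b) * u (g - a))"
    by (rule sum.Sigma[OF fF1]) (simp add: finite_ix s t)
  also have "\<dots> = (\<Sum>(b, c)\<in>Sigma F2 (\<lambda>b. ix t u (g - b)). s b * (t c * u (g - b - c)))"
  proof (rule sum.reindex_bij_witness[of _ "\<lambda>(b, c). (b + c, b)" "\<lambda>(a, b). (b, a - b)"])
    fix p assume "p \<in> Sigma F2 (\<lambda>b. ix t u (g - b))"
    then show "(\<lambda>(a, b). (b, a - b)) ((\<lambda>(b, c). (b + c, b)) p) = p" by auto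
  next
    fix p assume "p \<in> Sigma F2 (\<lambda>b. ix t u (g - b))"
    then obtain b c where p: "p = (b, c)" "b \<in> F2" "c \<in> ix t u (g - b)" by auto
    then have "s b \<noteq> 0" "t c \<noteq> 0" "u (g - b - c) \<noteq> 0" by (auto simp: F2_def ix_def hsupp_def)
    moreover have "u (g - (b + c)) \<noteq> 0" using \<open>u (g - b - c) \<noteq> 0\<close> by (simp add: diff_diff_eq)
    ultimately have "b + c \<in> F1" "b \<in> ix s t (b + c)"
      unfolding F1_def SS_def ix_def hsupp_def by auto
    then show "(\<lambda>(b, c). (b + c, b)) p \<in> Sigma F1 (ix s t)" using p by auto
  next
    fix p assume "p \<in> Sigma F1 (ix s t)"
    then show "(\<lambda>(b, c). (b + c, b)) ((\<lambda>(a, b). (b, a - b)) p) = p" by auto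
  next
    fix p assume "p \<in> Sigma F1 (ix s t)"
    then obtain a b where p: "p = (a, b)" "a \<in> F1" "b \<in> ix s t a" by auto
    then have "s b \<noteq> 0" "t (a - b) \<noteq> 0" "u (g - a) \<noteq> 0" by (auto simp: F1_def ix_def hsupp_def)
    moreover have "g - b - (a - b) = g - a" "g - b = (a - b) + (g - a)" by (simp_all add: algebra_simps)
    ultimately have "g - b \<in> TU" unfolding TU_def hsupp_def by blast
    with \<open>s b \<noteq> 0\<close> \<open>t (a - b) \<noteq> 0\<close> \<open>u (g - a) \<noteq> 0\<close> \<open>g - b - (a - b) = g - a\<close>
    have "b \<in> F2" "a - b \<in> ix t u (g - b)"
      unfolding F2_def ix_def hsupp_def by auto
    then show "(\<lambda>(a, b). (b, a - b)) p \<in> Sigma F2 (\<lambda>b. ix t u (g - b))" using p by auto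
  next
    fix p assume "p \<in> Sigma F1 (ix s t)"
    then obtain a b where p: "p = (a, b)" by auto
    have "g - b - (a - b) = g - a" by (simp add: algebra_simps)
    then show "(case (\<lambda>(a, b). (b, a - b)) p of (b, c) \<Rightarrow> s b * (t c * u (g - b - c))) =
          (case p of (a, b) \<Rightarrow> s b * t (a - b) * u (g - a))" using p by (simp add: mult.assoc)
  qed
  also have "\<dots> = (\<Sum>b\<in>F2. \<Sum>c\<in>ix t u (g - b). s b * (t c * u (g - b - c)))"
    by (rule sum.Sigma[OF fF2, symmetric]) (simp add: finite_ix t u)
  also have "\<dots> = (\<Sum>b\<in>F2. s b * hmul t u (g - b))"
    by (simp add: hmul_ix sum_distrib_left)
  also have "\<dots> = hmul s (hmul t u) g"
    by (rule hmul_eq_sum[OF fF2 sub2, symmetric])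
  finally show "hmul (hmul s t) u g = hmul s (hmul t u) g" .
qed

typedef (overloaded) ('g::linordered_ab_group_add, 'k::field) hser = "{s :: ('g, 'k) hs. hahn s}"
  morphisms rep Abs_hser
  by (rule exI[of _ hzero]) (simp add: hahn_hzero)

lemma rep_hahn: "hahn (rep a)" using rep by simp

lemma rep_Abs: "hahn s \<Longrightarrow> rep (Abs_hser s) = s" by (simp add: Abs_hser_inverse)

instantiation hser :: (linordered_ab_group_add, field) comm_ring_1
begin
definition zero_hser_def: "0 = Abs_hser hzero"
definition one_hser_def: "1 = Abs_hser hone"
definition plus_hser_def: "a + b = Abs_hser (hadd (rep a) (rep b))"
definition uminus_hser_def: "- a = Abs_hser (hneg (rep a))"
definition minus_hser_def: "a - b = Abs_hser (hadd (rep a) (hneg (rep b)))"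
definition times_hser_def: "a * b = Abs_hser (hmul (rep a) (rep b))"

lemma rep_0: "rep (0::('a,'b) hser) = hzero" by (simp add: zero_hser_def rep_Abs hahn_hzero)
lemma rep_1: "rep (1::('a,'b) hser) = hone" by (simp add: one_hser_def rep_Abs hahn_hone)
lemma rep_plus: "rep (a + b) = hadd (rep a) (rep b)" by (simp add: plus_hser_def rep_Abs hahn_hadd rep_hahn)
lemma rep_uminus: "rep (- a) = hneg (rep a)" by (simp add: uminus_hser_def rep_Abs hahn_hneg rep_hahn)
lemma rep_minus: "rep (a - b) = hadd (rep a) (hneg (rep b))"
  by (simp add: minus_hser_def rep_Abs hahn_hneg hahn_hadd rep_hahn)
lemma rep_times: "rep (a * b) = hmul (rep a) (rep b)" by (simp add: times_hser_def rep_Abs hahn_hmul rep_hahn)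

lemma hser_eqI: "(\<And>g. rep a g = rep b g) \<Longrightarrow> a = b"
  by (metis rep_inject ext)

instance
proof
  fix a b c :: "('a, 'b) hser"
  show "a * b * c = a * (b * c)" by (simp add: rep_inject[symmetric] rep_times hmul_assoc rep_hahn)
  show "a * b = b * a" by (simp add: rep_inject[symmetric] rep_times hmul_comm)
  show "1 * a = a" by (simp add: rep_inject[symmetric] rep_times rep_1 hmul_hone)
  show "a + b + c = a + (b + c)" by (rule hser_eqI) (simp add: rep_plus hadd_def add.assoc)
  show "a + b = b + a" by (rule hser_eqI) (simp add: rep_plus hadd_def add.commute)
  show "0 + a = a" by (rule hser_eqI) (simp add: rep_plus rep_0 hadd_def hzero_def)
  show "- a + a = 0" by (rule hser_eqI) (simp add: rep_plus rep_0 rep_uminus hadd_def hzero_def hneg_def)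
  show "a - b = a + - b" by (rule hser_eqI) (simp add: rep_plus rep_minus rep_uminus)
  show "(a + b) * c = a * c + b * c"
    by (simp add: rep_inject[symmetric] rep_times rep_plus hmul_comm[of _ "rep c"] hmul_hadd_right rep_hahn)
  have "rep (0::('a, 'b) hser) 0 \<noteq> rep 1 0" by (simp add: rep_0 rep_1 hzero_def hone_def hconst_def)
  then show "(0::('a, 'b) hser) \<noteq> 1" by metis
qed
end

lemma rep_sum: "rep (\<Sum>i\<in>I. F i) g = (\<Sum>i\<in>I. rep (F i) g)"
proof (cases "finite I")
  case True then show ?thesis
    by (induction I rule: finite_induct) (simp_all add: rep_0 rep_plus hzero_def hadd_def)
next
  case False then show ?thesis by (simp add: rep_0 hzero_def)
qed

lemma rep_sum_fun: "rep (\<Sum>i\<in>I. F i) = hsum (\<lambda>i. rep (F i)) I"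
  by (rule ext) (simp add: rep_sum hsum_def)

lemma taylor_seq:
  fixes Z :: "nat \<Rightarrow> 'a::comm_ring_1"
  assumes Z0: "\<forall>m>n. Z m = 0"
  shows "(\<Sum>m\<le>n. Z m * (w + h) ^ m) =
         (\<Sum>i\<le>n. (\<Sum>k\<le>n. of_nat ((k + i) choose i) * Z (k + i) * w ^ k) * h ^ i)"
proof -
  define f where "f i m = of_nat (m choose i) * Z m * w ^ (m - i)" for i m
  have step1: "Z m * (w + h) ^ m = (\<Sum>i\<le>n. f i m * h ^ i)" if "m \<le> n" for m
  proof -
    have "(h + w) ^ m = (\<Sum>i\<le>m. of_nat (m choose i) * h ^ i * w ^ (m - i))" by (rule binomial_ring)
    also have "\<dots> = (\<Sum>i\<le>n. of_nat (m choose i) * h ^ i * w ^ (m - i))"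
    proof (rule sum.mono_neutral_left)
      show "\<forall>i\<in>{..n} - {..m}. of_nat (m choose i) * h ^ i * w ^ (m - i) = 0"
        by (simp add: binomial_eq_0)
    qed (use that in auto)
    finally have "Z m * (w + h) ^ m = (\<Sum>i\<le>n. Z m * (of_nat (m choose i) * h ^ i * w ^ (m - i)))"
      by (simp add: add.commute sum_distrib_left)
    then show ?thesis unfolding f_def by (simp add: mult_ac)
  qed
  have step2: "(\<Sum>m\<le>n. f i m) = (\<Sum>k\<le>n. of_nat ((k + i) choose i) * Z (k + i) * w ^ k)" for i
  proof -
    have "(\<Sum>k\<le>n. of_nat ((k + i) choose i) * Z (k + i) * w ^ k) = (\<Sum>k\<in>{0..n}. f i (k + i))"
      unfolding f_def by (simp add: atMost_atLeast0)
    also have "\<dots> = (\<Sum>m\<in>{0 + i..n + i}. f i m)" by (rule sum.shift_bounds_cl_nat_ivl[symmetric])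
    also have "\<dots> = (\<Sum>m\<in>{..n + i}. f i m)"
      by (rule sum.mono_neutral_left) (auto simp: f_def binomial_eq_0 not_le)
    also have "\<dots> = (\<Sum>m\<le>n. f i m)"
      by (rule sum.mono_neutral_right) (auto simp: f_def Z0)
    finally show ?thesis by simp
  qed
  have "(\<Sum>m\<le>n. Z m * (w + h) ^ m) = (\<Sum>m\<le>n. \<Sum>i\<le>n. f i m * h ^ i)"
    by (rule sum.cong) (simp_all add: step1)
  also have "\<dots> = (\<Sum>i\<le>n. \<Sum>m\<le>n. f i m * h ^ i)" by (rule sum.swap)
  also have "\<dots> = (\<Sum>i\<le>n. (\<Sum>m\<le>n. f i m) * h ^ i)" by (simp add: sum_distrib_right)
  also have "\<dots> = (\<Sum>i\<le>n. (\<Sum>k\<le>n. of_nat ((k + i) choose i) * Z (k + i) * w ^ k) * h ^ i)"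
    by (simp add: step2)
  finally show ?thesis .
qed

definition vge :: "('g::linordered_ab_group_add, 'k::field) hser \<Rightarrow> 'g \<Rightarrow> bool" where
  "vge a l \<longleftrightarrow> (\<forall>g<l. rep a g = 0)"

definition Cc :: "'k \<Rightarrow> ('g::linordered_ab_group_add, 'k::field) hser" where
  "Cc c = Abs_hser (hconst c)"

lemma rep_Cc: "rep (Cc c) = hconst c" by (simp add: Cc_def rep_Abs hahn_hconst)

lemma vge_mono: "vge a l \<Longrightarrow> l' \<le> l \<Longrightarrow> vge a l'"
  by (auto simp: vge_def)

lemma vge_0: "vge 0 l" by (simp add: vge_def rep_0 hzero_def)
lemma vge_1: "vge 1 0" by (simp add: vge_def rep_1 hone_def hconst_def)
lemma vge_Cc: "vge (Cc c) 0" by (simp add: vge_def rep_Cc hconst_def)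

lemma vge_add: "vge a l \<Longrightarrow> vge b l \<Longrightarrow> vge (a + b) l"
  by (simp add: vge_def rep_plus hadd_def)

lemma vge_sum: "(\<And>i. i \<in> I \<Longrightarrow> vge (F i) l) \<Longrightarrow> vge (\<Sum>i\<in>I. F i) l"
  by (simp add: vge_def rep_sum)

lemma ix_empty_below:
  assumes "vge a l1" "vge b l2" "g < l1 + l2"
  shows "ix (rep a) (rep b) g = {}"
proof (rule ccontr)
  assume "ix (rep a) (rep b) g \<noteq> {}"
  then obtain t where "rep a t \<noteq> 0" "rep b (g - t) \<noteq> 0" by (auto simp: ix_def)
  then have "l1 \<le> t" "l2 \<le> g - t" using assms by (auto simp: vge_def not_less[symmetric])
  then have "l1 + l2 \<le> t + (g - t)" by (rule add_mono)
  then show False using assms(3) by simp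
qed

lemma vge_mult: "vge a l1 \<Longrightarrow> vge b l2 \<Longrightarrow> vge (a * b) (l1 + l2)"
  unfolding vge_def[of "a * b"] rep_times hmul_ix using ix_empty_below by fastforce

lemma coeff_mult:
  assumes "vge a l1" "vge b l2"
  shows "rep (a * b) (l1 + l2) = rep a l1 * rep b l2"
proof -
  have "ix (rep a) (rep b) (l1 + l2) \<subseteq> {l1}"
  proof
    fix t assume "t \<in> ix (rep a) (rep b) (l1 + l2)"
    then have "rep a t \<noteq> 0" "rep b (l1 + l2 - t) \<noteq> 0" by (auto simp: ix_def)
    then have "l1 \<le> t" "l2 \<le> l1 + l2 - t" using assms by (auto simp: vge_def not_less[symmetric])
    then show "t \<in> {l1}" by (simp add: algebra_simps)
  qed
  then have "hmul (rep a) (rep b) (l1 + l2) = (\<Sum>t\<in>{l1}. rep a t * rep b (l1 + l2 - t))"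
    by (rule hmul_eq_sum[rotated]) simp
  then show ?thesis by (simp add: rep_times)
qed

lemma vge_mult0: "vge a 0 \<Longrightarrow> vge b 0 \<Longrightarrow> vge (a * b) 0"
  using vge_mult[of a 0 b 0] by simp

lemma vge_power0: "vge a 0 \<Longrightarrow> vge (a ^ k) 0"
  by (induction k) (simp_all add: vge_1 vge_mult0)

lemma vge_prod0: "(\<And>i. i \<in> I \<Longrightarrow> vge (F i) 0) \<Longrightarrow> vge (\<Prod>i\<in>I. F i) 0"
proof (induction I rule: infinite_finite_induct)
  case (infinite A) then show ?case by (simp add: vge_1)
next
  case empty then show ?case by (simp add: vge_1)
next
  case (insert x F) then show ?case by (simp add: vge_mult0)
qed

fun nmul :: "nat \<Rightarrow> 'g::linordered_ab_group_add \<Rightarrow> 'g" where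
  "nmul 0 l = 0"
| "nmul (Suc i) l = l + nmul i l"

lemma nmul_mono: "0 \<le> l \<Longrightarrow> i \<le> j \<Longrightarrow> nmul i l \<le> nmul j l"
proof (induction j)
  case 0 then show ?case by simp
next
  case (Suc j)
  show ?case
  proof (cases "i = Suc j")
    case True then show ?thesis by simp
  next
    case False
    then have "nmul i l \<le> nmul j l" using Suc by simp
    also have "\<dots> \<le> l + nmul j l" using Suc.prems(1) by simp
    finally show ?thesis by simp
  qed
qed

lemma vge_power: "vge h l \<Longrightarrow> vge (h ^ i) (nmul i l)"
  by (induction i) (simp_all add: vge_1 vge_mult)

lemma coeff_power: "vge h l \<Longrightarrow> rep (h ^ i) (nmul i l) = (rep h l) ^ i"
proof (induction i)
  case 0 then show ?case by (simp add: rep_1 hone_def hconst_def)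
next
  case (Suc i)
  have "rep (h ^ Suc i) (nmul (Suc i) l) = rep (h * h ^ i) (l + nmul i l)" by simp
  also have "\<dots> = rep h l * rep (h ^ i) (nmul i l)" by (rule coeff_mult[OF Suc.prems vge_power[OF Suc.prems]])
  finally show ?case using Suc by simp
qed

lemma hval_props:
  fixes s :: "('g::linordered_ab_group_add, 'k::field) hs"
  assumes "hahn s" "s \<noteq> hzero"
  shows "s (hval s) \<noteq> 0" "\<And>g. g < hval s \<Longrightarrow> s g = 0"
proof -
  have "hsupp s \<noteq> {}" using assms(2) by (auto simp: hsupp_def hzero_def)
  then obtain m where m: "m \<in> hsupp s" "\<forall>y\<in>hsupp s. m \<le> y"
    using wo_minD[of "hsupp s" "hsupp s"] assms(1) by (auto simp: hahn_wo)
  have "hval s = m" unfolding hval_def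
    by (rule Least_equality) (use m in \<open>auto simp: hsupp_def\<close>)
  then show "s (hval s) \<noteq> 0" "\<And>g. g < hval s \<Longrightarrow> s g = 0" using m by (auto simp: hsupp_def not_le[symmetric])
qed

lemma vge_hval:
  assumes "hahn s" "s = hzero \<or> l \<le> hval s"
  shows "vge (Abs_hser s) l"
  unfolding vge_def rep_Abs[OF assms(1)]
proof (intro allI impI)
  fix g assume "g < l"
  show "s g = 0"
  proof (cases "s = hzero")
    case True then show ?thesis by (simp add: hzero_def)
  next
    case False
    then have "g < hval s" using assms(2) \<open>g < l\<close> by auto
    then show ?thesis using hval_props(2)[OF assms(1) False] by blast
  qed
qed

lemma hscal_hmul: "hscal c s = hmul (hconst c) (s :: ('g::linordered_ab_group_add, 'k::field) hs)"
proof
  fix g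
  have "ix (hconst c) s g \<subseteq> {0}" by (auto simp: ix_def hconst_def split: if_splits)
  then have "hmul (hconst c) s g = (\<Sum>a\<in>{0}. hconst c a * s (g - a))" by (rule hmul_eq_sum[rotated]) simp
  then show "hscal c s g = hmul (hconst c) s g" by (simp add: hconst_def hscal_def)
qed

lemma rep_Cc_mult: "rep (Cc c * a) = hscal c (rep a)"
  by (simp add: rep_times rep_Cc hscal_hmul)

lemma rep_power: "rep (a ^ k) = hpow (rep a) k"
  by (induction k) (simp_all add: hpow_def rep_1 rep_times)

lemma hprodn_Suc: "hprodn F (Suc m) = hmul (hprodn F m) (F m)"
  by (simp add: hprodn_def)

lemma rep_prod: "rep (\<Prod>i<m. F i) = hprodn (\<lambda>i. rep (F i)) m"
  by (induction m) (simp_all add: hprodn_def rep_1 rep_times hmul_comm)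

lemma hprodn_cong: "(\<And>i. i < m \<Longrightarrow> F i = G i) \<Longrightarrow> hprodn F m = hprodn G m"
  unfolding hprodn_def by (rule List.fold_cong) auto

lemma hsum_cong: "(\<And>i. i \<in> I \<Longrightarrow> F i = G i) \<Longrightarrow> hsum F I = hsum G I"
  unfolding hsum_def by (auto intro!: ext sum.cong)

lemma Cc_mult: "Cc (a * b) = Cc a * Cc b"
proof -
  have "rep (Cc (a * b)) = rep (Cc a * Cc b)"
    by (simp add: rep_Cc_mult) (simp add: rep_Cc hscal_def hconst_def fun_eq_iff)
  then show ?thesis by (simp add: rep_inject)
qed

lemma Cc_add: "Cc (a + b) = Cc a + Cc b"
proof -
  have "rep (Cc (a + b)) = rep (Cc a + Cc b)"
    by (simp add: rep_plus rep_Cc hadd_def hconst_def fun_eq_iff)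
  then show ?thesis by (simp add: rep_inject)
qed

lemma Cc_0: "Cc 0 = 0"
  by (simp add: rep_inject[symmetric] rep_Cc rep_0 hconst_def hzero_def fun_eq_iff)

lemma Cc_1: "Cc 1 = 1"
  by (simp add: rep_inject[symmetric] rep_Cc rep_1 hone_def)

lemma Cc_of_nat: "Cc (of_nat m) = of_nat m"
  by (induction m) (simp_all add: Cc_0 Cc_1 Cc_add)

definition Xm :: "(nat \<Rightarrow> ('g::linordered_ab_group_add, 'k::field) hser) \<Rightarrow> nat \<Rightarrow> (nat \<Rightarrow> nat) \<Rightarrow> ('g, 'k) hser" where
  "Xm xs d \<alpha> = (\<Prod>i<d. xs i ^ \<alpha> i)"

definition Ev :: "(nat \<Rightarrow> ('g::linordered_ab_group_add, 'k::field) hser) \<Rightarrow> nat \<Rightarrow> (nat \<Rightarrow> ('g, 'k) hser)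
    \<Rightarrow> nat \<Rightarrow> nat \<Rightarrow> (nat \<Rightarrow> (nat \<Rightarrow> nat) \<Rightarrow> 'k) \<Rightarrow> ('g, 'k) hser \<Rightarrow> ('g, 'k) hser" where
  "Ev xs d bs r n c y = (\<Sum>j<r. (\<Sum>\<alpha>\<in>mons d n. Cc (c j \<alpha>) * (Xm xs d \<alpha> * y ^ \<alpha> d)) * bs j)"

definition Zc :: "(nat \<Rightarrow> ('g::linordered_ab_group_add, 'k::field) hser) \<Rightarrow> nat \<Rightarrow> (nat \<Rightarrow> ('g, 'k) hser)
    \<Rightarrow> nat \<Rightarrow> nat \<Rightarrow> (nat \<Rightarrow> (nat \<Rightarrow> nat) \<Rightarrow> 'k) \<Rightarrow> nat \<Rightarrow> ('g, 'k) hser" where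
  "Zc xs d bs r n c k = (\<Sum>j<r. (\<Sum>\<alpha>\<in>{\<alpha> \<in> mons d n. \<alpha> d = k}. Cc (c j \<alpha>) * Xm xs d \<alpha>) * bs j)"

definition shiftc :: "nat \<Rightarrow> nat \<Rightarrow> nat \<Rightarrow> (nat \<Rightarrow> (nat \<Rightarrow> nat) \<Rightarrow> 'k::field) \<Rightarrow> nat \<Rightarrow> (nat \<Rightarrow> nat) \<Rightarrow> 'k" where
  "shiftc d n i c j \<alpha> = (if \<alpha>(d := \<alpha> d + i) \<in> mons d n
      then of_nat ((\<alpha> d + i) choose i) * c j (\<alpha>(d := \<alpha> d + i)) else 0)"

lemma mons_le: "\<alpha> \<in> mons d n \<Longrightarrow> i \<le> d \<Longrightarrow> \<alpha> i \<le> n"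
proof -
  assume a: "\<alpha> \<in> mons d n" "i \<le> d"
  have "\<alpha> i \<le> (\<Sum>i\<le>d. \<alpha> i)" by (rule member_le_sum) (use a in auto)
  then show ?thesis using a by (auto simp: mons_def)
qed

lemma finite_mons: "finite (mons d n)"
proof -
  have "inj_on (\<lambda>\<alpha>. map \<alpha> [0..<Suc d]) (mons d n)"
  proof (rule inj_onI)
    fix \<alpha> \<beta> assume ab: "\<alpha> \<in> mons d n" "\<beta> \<in> mons d n" "map \<alpha> [0..<Suc d] = map \<beta> [0..<Suc d]"
    show "\<alpha> = \<beta>"
    proof
      fix i show "\<alpha> i = \<beta> i"
      proof (cases "i \<le> d")
        case True
        have "\<forall>x\<in>set [0..<Suc d]. \<alpha> x = \<beta> x" using ab(3) by (simp only: map_eq_conv)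
        then show ?thesis using True by (simp del: upt_Suc)
      next
        case False then show ?thesis using ab(1,2) by (simp add: mons_def)
      qed
    qed
  qed
  moreover have "(\<lambda>\<alpha>. map \<alpha> [0..<Suc d]) ` mons d n \<subseteq> {xs. set xs \<subseteq> {..n} \<and> length xs = Suc d}"
    using mons_le by (auto simp del: upt_Suc)
  moreover have "finite {xs. set xs \<subseteq> {..n} \<and> length xs = Suc d}"
    by (rule finite_lists_length_eq) simp
  ultimately show ?thesis by (metis finite_imageD finite_subset)
qed

lemma Xm_upd: "Xm xs d (\<alpha>(d := v)) = Xm xs d \<alpha>"
  unfolding Xm_def by (rule prod.cong) auto

lemma Dn_eval_rep:
  assumes hx: "\<forall>i<d. hahn (x i)" and hb: "\<forall>j<r. hahn (b j)" and hy: "hahn y"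
  shows "Dn_eval x d b r n c y = rep (Ev (\<lambda>i. Abs_hser (x i)) d (\<lambda>j. Abs_hser (b j)) r n c (Abs_hser y))"
proof -
  have X: "rep (Xm (\<lambda>i. Abs_hser (x i)) d \<alpha>) = xmon x d \<alpha>" for \<alpha>
    unfolding Xm_def rep_prod rep_power xmon_def
    by (rule hprodn_cong) (simp add: rep_Abs hx)
  have "rep (Ev (\<lambda>i. Abs_hser (x i)) d (\<lambda>j. Abs_hser (b j)) r n c (Abs_hser y)) =
     hsum (\<lambda>j. hmul (hsum (\<lambda>\<alpha>. hscal (c j \<alpha>) (hmul (rep (Xm (\<lambda>i. Abs_hser (x i)) d \<alpha>)) (hpow y (\<alpha> d)))) (mons d n))
        (rep (Abs_hser (b j)))) {..<r}"
    by (simp add: Ev_def rep_sum_fun rep_times rep_Cc_mult rep_power rep_Abs[OF hy] rep_Cc hscal_hmul)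
  also have "\<dots> = Dn_eval x d b r n c y"
    unfolding Dn_eval_def X by (rule hsum_cong) (simp add: rep_Abs hb)
  finally show ?thesis by simp
qed

lemma Dn_zcoeff_rep:
  assumes hx: "\<forall>i<d. hahn (x i)" and hb: "\<forall>j<r. hahn (b j)"
  shows "Dn_zcoeff x d b r n c k = rep (Zc (\<lambda>i. Abs_hser (x i)) d (\<lambda>j. Abs_hser (b j)) r n c k)"
proof -
  have X: "rep (Xm (\<lambda>i. Abs_hser (x i)) d \<alpha>) = xmon x d \<alpha>" for \<alpha>
    unfolding Xm_def rep_prod rep_power xmon_def
    by (rule hprodn_cong) (simp add: rep_Abs hx)
  have "rep (Zc (\<lambda>i. Abs_hser (x i)) d (\<lambda>j. Abs_hser (b j)) r n c k) =
     hsum (\<lambda>j. hmul (hsum (\<lambda>\<alpha>. hscal (c j \<alpha>) (rep (Xm (\<lambda>i. Abs_hser (x i)) d \<alpha>))) {\<alpha> \<in> mons d n. \<alpha> d = k})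
        (rep (Abs_hser (b j)))) {..<r}"
    by (simp add: Zc_def rep_sum_fun rep_times rep_Cc_mult rep_Cc hscal_hmul)
  also have "\<dots> = Dn_zcoeff x d b r n c k"
    unfolding Dn_zcoeff_def X by (rule hsum_cong) (simp add: rep_Abs hb)
  finally show ?thesis by simp
qed

lemma Ev_Z: "Ev xs d bs r n c y = (\<Sum>k\<le>n. Zc xs d bs r n c k * y ^ k)"
proof -
  have inner: "(\<Sum>\<alpha>\<in>mons d n. Cc (c j \<alpha>) * (Xm xs d \<alpha> * y ^ \<alpha> d)) =
      (\<Sum>k\<le>n. (\<Sum>\<alpha>\<in>{\<alpha> \<in> mons d n. \<alpha> d = k}. Cc (c j \<alpha>) * Xm xs d \<alpha>) * y ^ k)" for j
  proof -
    have "(\<Sum>\<alpha>\<in>mons d n. Cc (c j \<alpha>) * (Xm xs d \<alpha> * y ^ \<alpha> d)) =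
        (\<Sum>k\<le>n. \<Sum>\<alpha>\<in>{\<alpha>. \<alpha> \<in> mons d n \<and> \<alpha> d = k}. Cc (c j \<alpha>) * (Xm xs d \<alpha> * y ^ \<alpha> d))"
      by (rule sum.group[symmetric]) (auto simp: finite_mons mons_le)
    also have "\<dots> = (\<Sum>k\<le>n. (\<Sum>\<alpha>\<in>{\<alpha> \<in> mons d n. \<alpha> d = k}. Cc (c j \<alpha>) * Xm xs d \<alpha>) * y ^ k)"
      by (rule sum.cong) (auto simp: sum_distrib_right mult.assoc intro!: sum.cong)
    finally show ?thesis .
  qed
  have "Ev xs d bs r n c y = (\<Sum>j<r. \<Sum>k\<le>n. (\<Sum>\<alpha>\<in>{\<alpha> \<in> mons d n. \<alpha> d = k}. Cc (c j \<alpha>) * Xm xs d \<alpha>) * bs j * y ^ k)"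
    unfolding Ev_def inner sum_distrib_right by (simp only: mult_ac)
  also have "\<dots> = (\<Sum>k\<le>n. \<Sum>j<r. (\<Sum>\<alpha>\<in>{\<alpha> \<in> mons d n. \<alpha> d = k}. Cc (c j \<alpha>) * Xm xs d \<alpha>) * bs j * y ^ k)"
    by (rule sum.swap)
  also have "\<dots> = (\<Sum>k\<le>n. Zc xs d bs r n c k * y ^ k)"
    by (simp add: Zc_def sum_distrib_right)
  finally show ?thesis .
qed

lemma Zc_big: "n < k \<Longrightarrow> Zc xs d bs r n c k = 0"
proof -
  assume "n < k"
  have "\<And>\<alpha>. \<alpha> \<in> mons d n \<Longrightarrow> \<alpha> d \<noteq> k" using mons_le[of _ d n d] \<open>n < k\<close> by fastforce
  then have e: "{\<alpha> \<in> mons d n. \<alpha> d = k} = {}" by auto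
  show ?thesis unfolding Zc_def e by simp
qed

lemma Zc_shift:
  "Zc xs d bs r n (shiftc d n i c) k = of_nat ((k + i) choose i) * Zc xs d bs r n c (k + i)"
proof -
  define S1 where "S1 = {\<alpha> \<in> mons d n. \<alpha> d = k \<and> \<alpha>(d := k + i) \<in> mons d n}"
  define S2 where "S2 = {\<beta> \<in> mons d n. \<beta> d = k + i}"
  have inner: "(\<Sum>\<alpha>\<in>{\<alpha> \<in> mons d n. \<alpha> d = k}. Cc (shiftc d n i c j \<alpha>) * Xm xs d \<alpha>) =
     of_nat ((k + i) choose i) * (\<Sum>\<beta>\<in>S2. Cc (c j \<beta>) * Xm xs d \<beta>)" for j
  proof -
    have "(\<Sum>\<alpha>\<in>{\<alpha> \<in> mons d n. \<alpha> d = k}. Cc (shiftc d n i c j \<alpha>) * Xm xs d \<alpha>) =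
       (\<Sum>\<alpha>\<in>S1. Cc (shiftc d n i c j \<alpha>) * Xm xs d \<alpha>)"
      by (rule sum.mono_neutral_right) (auto simp: S1_def shiftc_def Cc_0 finite_mons)
    also have "\<dots> = (\<Sum>\<alpha>\<in>S1. of_nat ((k + i) choose i) * (Cc (c j (\<alpha>(d := k + i))) * Xm xs d (\<alpha>(d := k + i))))"
      by (rule sum.cong) (auto simp: S1_def shiftc_def Cc_mult Cc_of_nat Xm_upd mult.assoc)
    also have "\<dots> = of_nat ((k + i) choose i) * (\<Sum>\<alpha>\<in>S1. Cc (c j (\<alpha>(d := k + i))) * Xm xs d (\<alpha>(d := k + i)))"
      by (simp add: sum_distrib_left)
    also have "(\<Sum>\<alpha>\<in>S1. Cc (c j (\<alpha>(d := k + i))) * Xm xs d (\<alpha>(d := k + i))) = (\<Sum>\<beta>\<in>S2. Cc (c j \<beta>) * Xm xs d \<beta>)"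
    proof (rule sum.reindex_bij_witness[of _ "\<lambda>\<beta>. \<beta>(d := k)" "\<lambda>\<alpha>. \<alpha>(d := k + i)"])
      fix \<alpha> assume "\<alpha> \<in> S1" then show "\<alpha>(d := k + i, d := k) = \<alpha>" by (auto simp: S1_def)
    next
      fix \<alpha> assume "\<alpha> \<in> S1" then show "\<alpha>(d := k + i) \<in> S2" by (auto simp: S1_def S2_def)
    next
      fix \<beta> assume "\<beta> \<in> S2" then show "\<beta>(d := k, d := k + i) = \<beta>" by (auto simp: S2_def)
    next
      fix \<beta> assume b: "\<beta> \<in> S2"
      have "(\<Sum>l\<le>d. (\<beta>(d := k)) l) \<le> (\<Sum>l\<le>d. \<beta> l)" by (rule sum_mono) (use b in \<open>auto simp: S2_def\<close>)
      then have "\<beta>(d := k) \<in> mons d n" using b by (auto simp: S2_def mons_def)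
      moreover have "\<beta>(d := k, d := k + i) = \<beta>" using b by (auto simp: S2_def)
      ultimately show "\<beta>(d := k) \<in> S1" using b by (auto simp: S1_def S2_def)
    next
      fix \<alpha> assume "\<alpha> \<in> S1"
      show "Cc (c j (\<alpha>(d := k + i))) * Xm xs d (\<alpha>(d := k + i)) = Cc (c j (\<alpha>(d := k + i))) * Xm xs d (\<alpha>(d := k + i))" ..
    qed
    finally show ?thesis .
  qed
  have "Zc xs d bs r n (shiftc d n i c) k = (\<Sum>j<r. of_nat ((k + i) choose i) * ((\<Sum>\<beta>\<in>S2. Cc (c j \<beta>) * Xm xs d \<beta>) * bs j))"
    unfolding Zc_def inner by (simp only: mult.assoc)
  also have "\<dots> = of_nat ((k + i) choose i) * Zc xs d bs r n c (k + i)"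
    unfolding Zc_def S2_def by (simp only: sum_distrib_left)
  finally show ?thesis .
qed

lemma Ev_shift: "Ev xs d bs r n (shiftc d n i c) w =
    (\<Sum>k\<le>n. of_nat ((k + i) choose i) * Zc xs d bs r n c (k + i) * w ^ k)"
  unfolding Ev_Z Zc_shift ..

lemma Ev_taylor: "Ev xs d bs r n c (w + h) = (\<Sum>i\<le>n. Ev xs d bs r n (shiftc d n i c) w * h ^ i)"
  unfolding Ev_Z[of xs d bs r n c] Ev_shift
  by (rule taylor_seq) (simp add: Zc_big)

theorem mainTheorem9:
  fixes A R :: "('g::linordered_ab_group_add, 'k::field) hs set"
    and x b :: "nat \<Rightarrow> ('g, 'k) hs"
    and d r n :: nat
    and w h :: "('g, 'k) hs"
    and \<tau> lam :: 'g
  assumes A_fg: "fin_gen_alg A"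
    and A_Rnu: "\<forall>a\<in>A. a = hzero \<or> hval a \<ge> 0"
    and R_def: "R = hlocalize A (hcenter A)"
    and dimR: "krull_dim_eq R d"
    and x_in: "\<forall>i<d. x i \<in> A"
    and x_indep: "alg_indep x d"
    and b_in: "\<forall>j<r. b j \<in> A"
    and A_eq: "A = {hsum (\<lambda>j. hmul (\<beta> j) (b j)) {..<r} | \<beta>. \<forall>j<r. \<beta> j \<in> Bset x d}"
    and w_hahn: "hahn w"
    and w_pos: "w = hzero \<or> hval w > 0"
    and tau_in: "\<tau> \<in> {hval (Dn_eval x d b r n c w) | c. Dn_eval x d b r n c w \<noteq> hzero}"
    and tau_max: "\<forall>c. Dn_eval x d b r n c w \<noteq> hzero \<longrightarrow> hval (Dn_eval x d b r n c w) \<le> \<tau>"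
    and lam: "lam > \<tau>"
    and h_hahn: "hahn h"
    and h_nz: "h \<noteq> hzero"
    and h_val: "hval h = lam"
  shows "\<forall>c. Dn_nonzero x d b r n c \<longrightarrow> Dn_eval x d b r n c (hadd w h) \<noteq> hzero"
proof (intro allI impI)
  fix c assume nz: "Dn_nonzero x d b r n c"
  have Ahahn: "\<forall>a\<in>A. hahn a" using A_fg by (auto simp: fin_gen_alg_def hsubalg_def)
  have hx: "\<forall>i<d. hahn (x i)" using x_in Ahahn by auto
  have hb: "\<forall>j<r. hahn (b j)" using b_in Ahahn by auto
  define XS where "XS i = Abs_hser (x i)" for i
  define BS where "BS j = Abs_hser (b j)" for j
  define W where "W = Abs_hser w"
  define H where "H = Abs_hser h"
  have vA: "vge (Abs_hser a) 0" if "a \<in> A" for a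
    using vge_hval[of a 0] Ahahn A_Rnu that by blast
  have vx: "vge (XS i) 0" if "i < d" for i unfolding XS_def using vA x_in that by blast
  have vb: "vge (BS j) 0" if "j < r" for j unfolding BS_def using vA b_in that by blast
  have vW: "vge W 0" unfolding W_def using vge_hval[OF w_hahn, of 0] w_pos less_imp_le by blast
  have vH: "vge H lam" unfolding H_def using vge_hval[OF w_hahn, of 0] vge_hval[OF h_hahn, of lam] h_val by auto
  have cH: "rep H lam \<noteq> 0" unfolding H_def rep_Abs[OF h_hahn] using hval_props(1)[OF h_hahn h_nz] h_val by simp
  have vEv: "vge (Ev XS d BS r n c' y) 0" if "vge y 0" for c' y
    unfolding Ev_def
  proof (rule vge_sum)
    fix j assume j: "j \<in> {..<r}"
    have "vge (\<Sum>\<alpha>\<in>mons d n. Cc (c' j \<alpha>) * (Xm XS d \<alpha> * y ^ \<alpha> d)) 0"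
    proof (rule vge_sum)
      fix \<alpha>
      have "vge (Xm XS d \<alpha>) 0" unfolding Xm_def
        by (rule vge_prod0) (simp add: vge_power0 vx)
      then show "vge (Cc (c' j \<alpha>) * (Xm XS d \<alpha> * y ^ \<alpha> d)) 0"
        by (intro vge_mult0 vge_Cc vge_power0[OF that])
    qed
    then show "vge ((\<Sum>\<alpha>\<in>mons d n. Cc (c' j \<alpha>) * (Xm XS d \<alpha> * y ^ \<alpha> d)) * BS j) 0"
      using vb j by (simp add: vge_mult0)
  qed
  have Dn: "Dn_eval x d b r n c' w = rep (Ev XS d BS r n c' W)" for c'
    unfolding XS_def BS_def W_def by (rule Dn_eval_rep[OF hx hb w_hahn])
  have hwh: "hahn (hadd w h)" by (rule hahn_hadd[OF w_hahn h_hahn])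
  have WH: "Abs_hser (hadd w h) = W + H"
    by (simp add: rep_inject[symmetric] rep_plus rep_Abs hwh W_def H_def w_hahn h_hahn)
  have Dn2: "Dn_eval x d b r n c (hadd w h) = rep (Ev XS d BS r n c (W + H))"
    unfolding XS_def BS_def WH[symmetric] by (rule Dn_eval_rep[OF hx hb hwh])
  have Zc_rep: "Dn_zcoeff x d b r n c k = rep (Zc XS d BS r n c k)" for k
    unfolding XS_def BS_def by (rule Dn_zcoeff_rep[OF hx hb])
  obtain c0 where c0: "\<tau> = hval (Dn_eval x d b r n c0 w)" "Dn_eval x d b r n c0 w \<noteq> hzero"
    using tau_in by blast
  have tau0: "0 \<le> \<tau>"
  proof (rule ccontr)
    assume "\<not> 0 \<le> \<tau>"
    then have "\<tau> < 0" by simp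
    have "vge (Ev XS d BS r n c0 W) 0" by (rule vEv[OF vW])
    then have "rep (Ev XS d BS r n c0 W) \<tau> = 0" using \<open>\<tau> < 0\<close> by (simp add: vge_def)
    moreover have "rep (Ev XS d BS r n c0 W) \<tau> \<noteq> 0"
      using hval_props(1)[OF rep_hahn, of "Ev XS d BS r n c0 W"] c0 Dn by simp
    ultimately show False by simp
  qed
  have lam0: "0 \<le> lam" using tau0 lam by simp
  define Dd where "Dd i = Ev XS d BS r n (shiftc d n i c) W" for i
  have Dd_bound: "hval (rep (Dd i)) \<le> \<tau>" if "Dd i \<noteq> 0" for i
  proof -
    have "rep (Dd i) \<noteq> hzero" using that by (simp add: rep_inject[symmetric] rep_0)
    then have "Dn_eval x d b r n (shiftc d n i c) w \<noteq> hzero" using Dn unfolding Dd_def by simp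
    then have "hval (Dn_eval x d b r n (shiftc d n i c) w) \<le> \<tau>" using tau_max by blast
    then show ?thesis using Dn unfolding Dd_def by simp
  qed
  obtain k0 where k0: "Zc XS d BS r n c k0 \<noteq> 0"
  proof -
    from nz obtain k1 where "rep (Zc XS d BS r n c k1) \<noteq> hzero" unfolding Dn_nonzero_def Zc_rep by blast
    then have "Zc XS d BS r n c k1 \<noteq> 0" by (auto simp: rep_0)
    then show ?thesis using that by blast
  qed
  define KS where "KS = {k. k \<le> n \<and> Zc XS d BS r n c k \<noteq> 0}"
  have k0n: "k0 \<le> n" using k0 by (cases "n < k0") (simp_all add: Zc_big)
  have fKS: "finite KS" unfolding KS_def by simp
  have k0KS: "k0 \<in> KS" unfolding KS_def using k0 k0n by simp
  define K where "K = Max KS"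
  have KKS: "K \<in> KS" unfolding K_def using fKS k0KS Max_in by blast
  have Kmax: "Zc XS d BS r n c k = 0" if "K < k" for k
  proof (rule ccontr)
    assume "Zc XS d BS r n c k \<noteq> 0"
    then have "k \<le> n" by (cases "n < k") (simp_all add: Zc_big)
    then have "k \<in> KS" using \<open>Zc XS d BS r n c k \<noteq> 0\<close> unfolding KS_def by simp
    then have "k \<le> K" unfolding K_def using fKS by simp
    then show False using that by simp
  qed
  have DdK: "Dd K = Zc XS d BS r n c K"
  proof -
    have "Dd K = (\<Sum>k\<le>n. of_nat ((k + K) choose K) * Zc XS d BS r n c (k + K) * W ^ k)"
      unfolding Dd_def by (rule Ev_shift)
    also have "\<dots> = (\<Sum>k\<in>{0}. of_nat ((k + K) choose K) * Zc XS d BS r n c (k + K) * W ^ k)"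
      by (rule sum.mono_neutral_right) (auto simp: Kmax)
    finally show ?thesis by simp
  qed
  have DK0: "Dd K \<noteq> 0" using DdK KKS unfolding KS_def by simp
  then have exD: "\<exists>i. Dd i \<noteq> 0" by blast
  define k where "k = (LEAST i. Dd i \<noteq> 0)"
  have Dk: "Dd k \<noteq> 0" unfolding k_def by (rule LeastI_ex[OF exD])
  have Dlt: "Dd i = 0" if "i < k" for i using that unfolding k_def by (rule not_less_Least[of _ "\<lambda>i. Dd i \<noteq> 0", simplified])
  have kK: "k \<le> K" unfolding k_def using DK0 by (rule Least_le)
  have kn: "k \<le> n" using kK KKS unfolding KS_def by simp
  define v where "v = hval (rep (Dd k))"
  have rDk: "rep (Dd k) \<noteq> hzero" using Dk by (simp add: rep_inject[symmetric] rep_0)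
  have vDk: "vge (Dd k) v" unfolding vge_def v_def using hval_props(2)[OF rep_hahn rDk] by blast
  have cDk: "rep (Dd k) v \<noteq> 0" unfolding v_def using hval_props(1)[OF rep_hahn rDk] .
  have vtau: "v \<le> \<tau>" unfolding v_def using Dd_bound[OF Dk] .
  define g0 where "g0 = v + nmul k lam"
  have termk: "rep (Dd i * H ^ i) g0 = (if i = k then rep (Dd k) v * (rep H lam) ^ k else 0)" if "i \<le> n" for i
  proof (cases "i < k")
    case True then show ?thesis using Dlt[OF True] by (simp add: rep_0 hzero_def)
  next
    case False
    show ?thesis
    proof (cases "i = k")
      case True
      have "rep (Dd k * H ^ k) (v + nmul k lam) = rep (Dd k) v * rep (H ^ k) (nmul k lam)"
        by (rule coeff_mult[OF vDk vge_power[OF vH]])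
      then show ?thesis using True coeff_power[OF vH] by (simp add: g0_def)
    next
      case False2: False
      then have "Suc k \<le> i" using False by simp
      have v1: "vge (Dd i * H ^ i) (0 + nmul i lam)"
        by (rule vge_mult[OF vEv[OF vW, of "shiftc d n i c", folded Dd_def] vge_power[OF vH]])
      have "g0 < lam + nmul k lam" unfolding g0_def using vtau lam by simp
      also have "\<dots> = nmul (Suc k) lam" by simp
      also have "\<dots> \<le> nmul i lam" by (rule nmul_mono[OF lam0 \<open>Suc k \<le> i\<close>])
      finally have "g0 < 0 + nmul i lam" by simp
      then show ?thesis using v1 False2 by (simp add: vge_def)
    qed
  qed
  have "rep (Ev XS d BS r n c (W + H)) g0 = (\<Sum>i\<le>n. rep (Dd i * H ^ i) g0)"
    unfolding Ev_taylor Dd_def rep_sum ..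
  also have "\<dots> = (\<Sum>i\<le>n. (if i = k then rep (Dd k) v * (rep H lam) ^ k else 0))"
    by (rule sum.cong) (simp_all add: termk)
  also have "\<dots> = rep (Dd k) v * (rep H lam) ^ k" using kn by simp
  finally have "rep (Ev XS d BS r n c (W + H)) g0 \<noteq> 0" using cDk cH by simp
  then show "Dn_eval x d b r n c (hadd w h) \<noteq> hzero" unfolding Dn2 by (auto simp: hzero_def)
qed
end
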